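(* Fix $n\ge1$, $p\in(0,1]$. Let $ALG$ be any $\gamma$-robust policy for the SP-UA. Then for every $U:[n]\to\mathbb R_+$ with $U_1\ge U_2\ge\cdots\ge U_n\ge0$, $\mathbb E[U(ALG)]\ge\gamma\,\mathbb E[U(OPT)]$. Moreover, \[ \gamma_n^*=\max_{ALG}\ \min\Big\{\frac{\mathbb E[U(ALG)]}{\mathbb E[U(OPT)]}:\ U:[n]\to\mathbb R_+,\ U\neq0,\ U_1\ge\cdots\ge U_n\ge0\Big\}, \] where the maximum is over policies for the SP-UA.
   Context: SP-UA model: fix $n\ge1$, $p\in(0,1]$; $n$ candidates with distinct overall ranks $1,\dots,n$ ($1$ best) arrive in uniformly random order; the decision maker sees only partial ranks (the rank of the current candidate among those arrived so far) and irrevocably decides (possibly randomly) to make an offer or pass; each candidate is independently willing to accept an offer with probability $p$, and the process stops when an offer is accepted. A policy collects a candidate of rank $i$ if it makes her an offer and she accepts. Robust ratio $\gamma_{\mathcal P}=\min_{k\in[n]}\Pr(\mathcal P\text{ collects a candidate with rank}\le k)/(1-(1-p)^k)$; $\gamma_n^*=\sup_{\mathcal P}\gamma_{\mathcal P}$; $\mathcal P$ is $\gamma$-robust if $\gamma\le\gamma_{\mathcal P}$. Given a utility $U$, $U(ALG)$ is $U_i$ if $ALG$ collects a candidate of overall rank $i$ and $0$ if it collects no one; $U(OPT)=U_{i^*}$ where $i^*$ is the best overall rank among candidates willing to accept (and $0$ if none is willing), so $\mathbb E[U(OPT)]=\sum_{i=1}^nU_ip(1-p)^{i-1}$. *)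

theory Defs
  imports Complex_Main "HOL-Combinatorics.Multiset_Permutations"
begin

(* An arrival sequence is a list xs of the overall ranks 1..n in arrival order
   (xs ranges uniformly over permutations_of_set {1..n}).
   A (behavioural, possibly randomised) policy is a function
     P :: nat list => bool list => real
   mapping the observed partial ranks r_1..r_t of the candidates arrived so far
   (including the current one) and the policy's own previous decisions
   d_1..d_{t-1} (True = offer made; any offer made was necessarily rejected,
   since the process is still running) to the probability of making an
   offer to the current (t-th) candidate. *)

type_synonym policy = "nat list \<Rightarrow> bool list \<Rightarrow> real"

definition valid_policy :: "policy \<Rightarrow> bool" where
  "valid_policy P \<longleftrightarrow> (\<forall>rs ds. 0 \<le> P rs ds \<and> P rs ds \<le> 1)"

definition partial_ranks :: "nat list \<Rightarrow> nat list" where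
  "partial_ranks seen =
     map (\<lambda>j. card {i. i \<le> j \<and> seen ! i \<le> seen ! j}) [0..<length seen]"

primrec run_value ::
  "policy \<Rightarrow> real \<Rightarrow> (nat \<Rightarrow> real) \<Rightarrow> nat list \<Rightarrow> bool list \<Rightarrow> nat list \<Rightarrow> real" where
  "run_value P p U seen ds [] = 0"
| "run_value P p U seen ds (x # rest) =
     (let seen' = seen @ [x]; q = P (partial_ranks seen') ds in
        q * (p * U x + (1 - p) * run_value P p U seen' (ds @ [True]) rest)
      + (1 - q) * run_value P p U seen' (ds @ [False]) rest)"

definition EU_alg :: "nat \<Rightarrow> real \<Rightarrow> policy \<Rightarrow> (nat \<Rightarrow> real) \<Rightarrow> real" where
  "EU_alg n p P U =
     (\<Sum>xs\<in>permutations_of_set {1..n}. run_value P p U [] [] xs)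
       / real (card (permutations_of_set {1..n}))"

definition EU_opt :: "nat \<Rightarrow> real \<Rightarrow> (nat \<Rightarrow> real) \<Rightarrow> real" where
  "EU_opt n p U = (\<Sum>i=1..n. U i * p * (1 - p) ^ (i - 1))"

definition prob_top :: "nat \<Rightarrow> real \<Rightarrow> policy \<Rightarrow> nat \<Rightarrow> real" where
  "prob_top n p P k = EU_alg n p P (\<lambda>i. if i \<le> k then 1 else 0)"

definition robust_ratio :: "nat \<Rightarrow> real \<Rightarrow> policy \<Rightarrow> real" where
  "robust_ratio n p P = Min ((\<lambda>k. prob_top n p P k / (1 - (1 - p) ^ k)) ` {1..n})"

definition gamma_star :: "nat \<Rightarrow> real \<Rightarrow> real" where
  "gamma_star n p = (SUP P\<in>{P. valid_policy P}. robust_ratio n p P)"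

definition monotone_utility :: "nat \<Rightarrow> (nat \<Rightarrow> real) \<Rightarrow> bool" where
  "monotone_utility n U \<longleftrightarrow>
     (\<forall>i j. 1 \<le> i \<longrightarrow> i \<le> j \<longrightarrow> j \<le> n \<longrightarrow> U j \<le> U i) \<and> (\<forall>i\<in>{1..n}. 0 \<le> U i)"

definition worst_utility_ratio :: "nat \<Rightarrow> real \<Rightarrow> policy \<Rightarrow> real" where
  "worst_utility_ratio n p P =
     (INF U\<in>{U. monotone_utility n U \<and> (\<exists>i\<in>{1..n}. U i \<noteq> 0)}.
        EU_alg n p P U / EU_opt n p U)"

end

theory Submission
  imports Defs "HOL-Analysis.Analysis"
begin

lemma rv_cong:
  "set xs \<subseteq> A \<Longrightarrow> (\<forall>i\<in>A. U i = V i) \<Longrightarrow>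
   run_value P p U seen ds xs = run_value P p V seen ds xs"
  by (induction xs arbitrary: seen ds) (auto simp: Let_def)

lemma rv_lin:
  assumes "finite K"
  shows "run_value P p (\<lambda>i. \<Sum>k\<in>K. c k * f k i) seen ds xs
       = (\<Sum>k\<in>K. c k * run_value P p (f k) seen ds xs)"
proof (induction xs arbitrary: seen ds)
  case Nil then show ?case by simp
next
  case (Cons x rest)
  define q where "q = P (partial_ranks (seen @ [x])) ds"
  define A where "A k = run_value P p (f k) (seen @ [x]) (ds @ [True]) rest" for k
  define B where "B k = run_value P p (f k) (seen @ [x]) (ds @ [False]) rest" for k
  have "(\<Sum>k\<in>K. c k * (q * (p * f k x + (1 - p) * A k) + (1 - q) * B k))
      = (\<Sum>k\<in>K. (q * p) * (c k * f k x) + (q * (1 - p)) * (c k * A k) + (1 - q) * (c k * B k))"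
    by (intro sum.cong) (auto simp: algebra_simps)
  also have "\<dots> = q * (p * (\<Sum>k\<in>K. c k * f k x) + (1 - p) * (\<Sum>k\<in>K. c k * A k))
      + (1 - q) * (\<Sum>k\<in>K. c k * B k)"
  proof -
    have "(\<Sum>k\<in>K. (q * p) * (c k * f k x) + (q * (1 - p)) * (c k * A k) + (1 - q) * (c k * B k))
      = (q * p) * (\<Sum>k\<in>K. c k * f k x) + (q * (1 - p)) * (\<Sum>k\<in>K. c k * A k)
        + (1 - q) * (\<Sum>k\<in>K. c k * B k)"
      by (simp add: sum.distrib sum_distrib_left)
    then show ?thesis by (simp add: algebra_simps)
  qed
  finally show ?case
    by (simp add: Let_def Cons q_def[symmetric] A_def[symmetric] B_def[symmetric])
qed

lemma EU_alg_lin: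
  assumes "finite K"
  shows "EU_alg n p P (\<lambda>i. \<Sum>k\<in>K. c k * f k i) = (\<Sum>k\<in>K. c k * EU_alg n p P (f k))"
  unfolding EU_alg_def
  by (simp add: rv_lin[OF assms] sum_divide_distrib sum_distrib_left sum.swap[of _ K]
        mult.assoc)

lemma EU_alg_cong:
  assumes "\<forall>i\<in>{1..n}. U i = V i"
  shows "EU_alg n p P U = EU_alg n p P V"
  unfolding EU_alg_def
  by (intro arg_cong2[where f="(/)"] sum.cong refl rv_cong[where A="{1..n}"])
     (use assms in \<open>auto dest: permutations_of_setD\<close>)

lemma EU_opt_lin:
  assumes "finite K"
  shows "EU_opt n p (\<lambda>i. \<Sum>k\<in>K. c k * f k i) = (\<Sum>k\<in>K. c k * EU_opt n p (f k))"
  unfolding EU_opt_def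
  by (simp add: sum_distrib_left sum_distrib_right sum.swap[of _ K] mult.assoc)

lemma EU_opt_cong:
  assumes "\<forall>i\<in>{1..n}. U i = V i"
  shows "EU_opt n p U = EU_opt n p V"
  unfolding EU_opt_def using assms by (intro sum.cong) auto

lemma geom: "(\<Sum>i=1..k. p * (1 - p) ^ (i - 1)) = 1 - (1 - (p::real)) ^ k"
  by (induction k) (auto simp: algebra_simps)

lemma EU_opt_ind:
  assumes "k \<le> n"
  shows "EU_opt n p (\<lambda>i. if i \<le> k then 1 else 0) = 1 - (1 - p) ^ k"
proof -
  have "EU_opt n p (\<lambda>i. if i \<le> k then 1 else 0)
      = (\<Sum>i\<in>{1..n}. if i \<le> k then p * (1 - p) ^ (i - 1) else 0)"
    unfolding EU_opt_def by (intro sum.cong) auto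
  also have "\<dots> = (\<Sum>i\<in>{1..k}. p * (1 - p) ^ (i - 1))"
    by (rule sum.mono_neutral_cong_right) (use assms in auto)
  also have "\<dots> = 1 - (1 - p) ^ k" by (rule geom)
  finally show ?thesis .
qed


lemma denom_pos:
  assumes "1 \<le> k" "0 < p" "p \<le> (1::real)"
  shows "0 < 1 - (1 - p) ^ k"
proof -
  have "(1 - p) ^ k \<le> (1 - p) ^ 1"
    using assms by (intro power_decreasing) auto
  then show ?thesis using assms by simp
qed

lemma prob_top_bound:
  assumes "k \<in> {1..n}" "0 < p" "p \<le> 1" "\<gamma> \<le> robust_ratio n p P"
  shows "\<gamma> * (1 - (1 - p) ^ k) \<le> prob_top n p P k"
proof -
  have "robust_ratio n p P \<le> prob_top n p P k / (1 - (1 - p) ^ k)"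
    unfolding robust_ratio_def using assms(1) by (intro Min_le) auto
  with assms have "\<gamma> \<le> prob_top n p P k / (1 - (1 - p) ^ k)" by linarith
  moreover have "0 < 1 - (1 - p) ^ k" using assms by (intro denom_pos) auto
  ultimately show ?thesis by (simp add: pos_le_divide_eq)
qed

lemma part1:
  assumes "0 < p" "p \<le> 1" "\<gamma> \<le> robust_ratio n p P" "monotone_utility n U"
  shows "\<gamma> * EU_opt n p U \<le> EU_alg n p P U"
proof -
  define U' where "U' j = (if j \<le> n then U j else 0)" for j
  define d where "d k = U' k - U' (Suc k)" for k
  define ind where "ind k i = (if i \<le> k then 1 else (0::real))" for k i :: nat
  have dec: "\<forall>i\<in>{1..n}. U i = (\<Sum>k\<in>{1..n}. d k * ind k i)"
  proof
    fix i assume i: "i \<in> {1..n}"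
    have "(\<Sum>k\<in>{1..n}. d k * ind k i) = (\<Sum>k\<in>{i..n}. d k)"
      by (rule sum.mono_neutral_cong_right) (use i in \<open>auto simp: ind_def\<close>)
    also have "\<dots> = - (\<Sum>k\<in>{i..n}. U' (Suc k) - U' k)"
      unfolding d_def by (simp add: sum_negf[symmetric])
    also have "\<dots> = U i"
      using i by (subst sum_Suc_diff) (auto simp: U'_def)
    finally show "U i = (\<Sum>k\<in>{1..n}. d k * ind k i)" by simp
  qed
  have alg: "EU_alg n p P U = (\<Sum>k\<in>{1..n}. d k * prob_top n p P k)"
    unfolding prob_top_def
    by (subst EU_alg_cong[OF dec], subst EU_alg_lin) (auto simp: ind_def[abs_def])
  have opt: "EU_opt n p U = (\<Sum>k\<in>{1..n}. d k * (1 - (1 - p) ^ k))"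
    by (subst EU_opt_cong[OF dec], subst EU_opt_lin)
       (auto simp: ind_def[abs_def] EU_opt_ind intro!: sum.cong)
  have dpos: "0 \<le> d k" if "k \<in> {1..n}" for k
    using assms(4) that unfolding monotone_utility_def d_def U'_def by auto
  have "\<gamma> * EU_opt n p U = (\<Sum>k\<in>{1..n}. d k * (\<gamma> * (1 - (1 - p) ^ k)))"
    by (simp add: opt sum_distrib_left algebra_simps)
  also have "\<dots> \<le> (\<Sum>k\<in>{1..n}. d k * prob_top n p P k)"
    by (intro sum_mono mult_left_mono prob_top_bound dpos) (use assms in auto)
  finally show ?thesis by (simp add: alg)
qed


lemma EU_opt_pos:
  assumes "0 < p" "p \<le> 1" "monotone_utility n U" "i \<in> {1..n}" "U i \<noteq> 0"
  shows "0 < EU_opt n p U"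
proof -
  have ui: "0 < U i" using assms unfolding monotone_utility_def by force
  have u1: "U i \<le> U 1" using assms unfolding monotone_utility_def by auto
  have "U 1 * p * (1 - p) ^ (1 - 1) \<le> EU_opt n p U"
    unfolding EU_opt_def
    by (rule member_le_sum) (use assms in \<open>auto simp: monotone_utility_def\<close>)
  moreover have "0 < U 1 * p * (1 - p) ^ (1 - 1)" using ui u1 assms by simp
  ultimately show ?thesis by linarith
qed

lemma worst_eq:
  assumes "1 \<le> n" "0 < p" "p \<le> 1"
  shows "worst_utility_ratio n p Q = robust_ratio n p Q"
proof -
  define W where "W = {U. monotone_utility n U \<and> (\<exists>i\<in>{1..n}. U i \<noteq> 0)}"
  have "robust_ratio n p Q \<in> (\<lambda>k. prob_top n p Q k / (1 - (1 - p) ^ k)) ` {1..n}"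
    unfolding robust_ratio_def using assms by (intro Min_in) auto
  then obtain k where k: "k \<in> {1..n}"
    and rk: "robust_ratio n p Q = prob_top n p Q k / (1 - (1 - p) ^ k)" by auto
  define V where "V = (\<lambda>i::nat. if i \<le> k then 1 else (0::real))"
  have m1: "V j \<le> V i" if "i \<le> j" for i j
    using that unfolding V_def by (cases "j \<le> k"; cases "i \<le> k") simp_all
  have m2: "0 \<le> V i" for i unfolding V_def by simp
  have V1: "V 1 \<noteq> 0" using k unfolding V_def by simp
  have VW: "V \<in> W" unfolding W_def monotone_utility_def
    using m1 m2 V1 assms(1) by auto
  have eq: "EU_alg n p Q V / EU_opt n p V = robust_ratio n p Q"
    using k by (simp add: rk V_def prob_top_def EU_opt_ind)
  have mem: "robust_ratio n p Q \<in> (\<lambda>U. EU_alg n p Q U / EU_opt n p U) ` W"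
    by (rule image_eqI[where x=V and f="\<lambda>U. EU_alg n p Q U / EU_opt n p U", OF eq[symmetric] VW])
  have lb: "robust_ratio n p Q \<le> EU_alg n p Q U / EU_opt n p U" if "U \<in> W" for U
  proof -
    from that obtain i where i: "i \<in> {1..n}" "U i \<noteq> 0" and m: "monotone_utility n U"
      unfolding W_def by auto
    have "0 < EU_opt n p U" using EU_opt_pos[OF assms(2,3) m i] .
    moreover have "robust_ratio n p Q * EU_opt n p U \<le> EU_alg n p Q U"
      using part1[OF assms(2,3) order.refl m] .
    ultimately show ?thesis by (simp add: pos_le_divide_eq)
  qed
  show ?thesis
    unfolding worst_utility_ratio_def W_def[symmetric]
    by (rule cInf_eq_minimum[OF mem]) (erule imageE, simp add: lb)
qed

lemma cont_rv:
  "continuous_on UNIV (\<lambda>f::(nat list \<times> bool list) \<Rightarrow> real. run_value (\<lambda>a b. f (a, b)) p U seen ds xs)"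
proof (induction xs arbitrary: seen ds)
  case Nil then show ?case by simp
next
  case (Cons x rest)
  show ?case
    by (simp add: Let_def) (intro continuous_intros continuous_on_product_coordinates Cons)
qed

lemma cont_Min:
  assumes "finite K" "K \<noteq> {}" "\<And>k. k \<in> K \<Longrightarrow> continuous_on S (g k)"
  shows "continuous_on S (\<lambda>x. Min ((\<lambda>k. (g k x)::real) ` K))"
  using assms
proof (induction K rule: finite_ne_induct)
  case (singleton k) then show ?case by simp
next
  case (insert a F)
  have "continuous_on S (\<lambda>x. min (g a x) (Min ((\<lambda>k. g k x) ` F)))"
    using insert by (intro continuous_intros) auto
  then show ?case using insert by simp
qed

lemma cont_rr:
  assumes "1 \<le> n" "0 < p" "p \<le> 1"
  shows "continuous_on UNIV (\<lambda>f::(nat list \<times> bool list) \<Rightarrow> real. robust_ratio n p (curry f))"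
proof -
  have d: "1 - (1 - p) ^ k \<noteq> 0" if "k \<in> {1..n}" for k
    using denom_pos[of k p] assms that by auto
  show ?thesis
    unfolding robust_ratio_def prob_top_def EU_alg_def curry_conv
    by (rule cont_Min) (use assms d in \<open>auto intro!: continuous_intros cont_rv\<close>)
qed

lemma compact_K: "compact {f::(nat list \<times> bool list) \<Rightarrow> real. \<forall>x. f x \<in> {0..1}}"
proof -
  have "compactin (product_topology (\<lambda>_. euclidean) UNIV)
          (PiE (UNIV::(nat list \<times> bool list) set) (\<lambda>_. {0..1::real}))"
    by (subst compactin_PiE) auto
  moreover have "PiE (UNIV::(nat list \<times> bool list) set) (\<lambda>_. {0..1::real})
      = {f. \<forall>x. f x \<in> {0..1}}" by (auto simp: PiE_def)
  ultimately show ?thesis by (simp add: euclidean_product_topology)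
qed

theorem proposition1:
  fixes n :: nat and p :: real
  assumes "1 \<le> n" and "0 < p" and "p \<le> 1"
  shows "(\<forall>P \<gamma> U. valid_policy P \<longrightarrow> \<gamma> \<le> robust_ratio n p P \<longrightarrow> monotone_utility n U
            \<longrightarrow> EU_alg n p P U \<ge> \<gamma> * EU_opt n p U)
       \<and> (\<exists>P. valid_policy P \<and> worst_utility_ratio n p P = gamma_star n p
              \<and> (\<forall>Q. valid_policy Q \<longrightarrow> worst_utility_ratio n p Q \<le> gamma_star n p))"
proof
  show "\<forall>P \<gamma> U. valid_policy P \<longrightarrow> \<gamma> \<le> robust_ratio n p P \<longrightarrow> monotone_utility n U
            \<longrightarrow> EU_alg n p P U \<ge> \<gamma> * EU_opt n p U"
    using part1 assms by blast
  define K where "K = {f::(nat list \<times> bool list) \<Rightarrow> real. \<forall>x. f x \<in> {0..1}}"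
  have "\<exists>f\<in>K. \<forall>g\<in>K. robust_ratio n p (curry g) \<le> robust_ratio n p (curry f)"
    unfolding K_def
    by (rule continuous_attains_sup[OF compact_K])
       (auto intro: continuous_on_subset[OF cont_rr[OF assms]])
  then obtain f where f: "f \<in> K"
    and fmax: "\<And>g. g \<in> K \<Longrightarrow> robust_ratio n p (curry g) \<le> robust_ratio n p (curry f)"
    by blast
  have vf: "valid_policy (curry f)" using f unfolding K_def valid_policy_def by auto
  have le: "robust_ratio n p Q \<le> robust_ratio n p (curry f)" if "valid_policy Q" for Q
  proof -
    have "case_prod Q \<in> K" using that unfolding K_def valid_policy_def by auto
    from fmax[OF this] show ?thesis by simp
  qed
  have gs: "gamma_star n p = robust_ratio n p (curry f)"
    unfolding gamma_star_def
    by (rule cSup_eq_maximum) (use vf le in auto)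
  show "\<exists>P. valid_policy P \<and> worst_utility_ratio n p P = gamma_star n p
              \<and> (\<forall>Q. valid_policy Q \<longrightarrow> worst_utility_ratio n p Q \<le> gamma_star n p)"
    using vf le gs worst_eq[OF assms] by metis
qed

end
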